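(* Let $(K,C,S)$ be a layered simplicial complex and let $(K,C,S)\searrow(K-\{f,p\},C-\{f,p\},S)$ be an elementary $C$-collapse of a principal simplex $p\in C$ using the free face $f\in C$ of $p$. Then the freely orthogonal deformation retraction $H:|K|\times I\to|K|$ associated to $p$ and $f$ satisfies $H_t(|K|-|S|)\subseteq|K|-|S|$ and $H_t(|S|)=|S|$ for all $t\in I$.
   Context: A simplicial complex is a set of finite nonempty sets (simplices) closed under passing to nonempty subsets (faces); $|K|$ is its geometric realization and $|s|$ the closed geometric simplex. A simplex is principal in $K$ if it is not a proper face of any simplex of $K$; $f$ is free in $K$ if it is a proper face of a principal simplex $p$ and of no other simplex of $K$. A layered simplicial complex is $(K,C,S)$ with $C,S$ disjoint subcomplexes of $K$. An elementary $C$-collapse uses $p\in C$ principal in $K$ and a face $f$ of $p$ free in $K$. Freely orthogonal deformation retraction: let $p$ be principal in $K$ with free face $f$, let $v$ be the vertex of $p$ not in $f$ and $f_1,\dots,f_m$ the vertices of $f$ ($m\ge1$). Identify $|p|$ via barycentric coordinates with $\{x\in\mathbb R^m: x_i\ge0,\ \sum x_i\le1\}$ ($v\mapsto0$, $f_i\mapsto e_i$). Define $r:|p|\to|p|$ by $r(x)=(x_1-x_j,\dots,x_m-x_j)$ where $x_j=\min\{x_1,\dots,x_m\}$, and $H:|K|\times I\to|K|$ by $H(x,t)=(1-t)x+t\,r(x)$ for $x\in|p|$ and $H(x,t)=x$ for $x\in|K|-|p|$; $H_t=H(\cdot,t)$. *)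

theory Defs
  imports Complex_Main
begin

definition simplicial_complex :: "'v set set \<Rightarrow> bool" where
  "simplicial_complex K \<longleftrightarrow>
     (\<forall>s\<in>K. finite s \<and> s \<noteq> {}) \<and>
     (\<forall>s\<in>K. \<forall>t. t \<subseteq> s \<and> t \<noteq> {} \<longrightarrow> t \<in> K)"

definition subcomplex :: "'v set set \<Rightarrow> 'v set set \<Rightarrow> bool" where
  "subcomplex L K \<longleftrightarrow> simplicial_complex L \<and> L \<subseteq> K"

definition layered_complex :: "'v set set \<Rightarrow> 'v set set \<Rightarrow> 'v set set \<Rightarrow> bool" where
  "layered_complex K C S \<longleftrightarrow>
     simplicial_complex K \<and> subcomplex C K \<and> subcomplex S K \<and> C \<inter> S = {}"

definition principal :: "'v set set \<Rightarrow> 'v set \<Rightarrow> bool" where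
  "principal K p \<longleftrightarrow> p \<in> K \<and> (\<forall>q\<in>K. \<not> p \<subset> q)"

definition free_face_of :: "'v set set \<Rightarrow> 'v set \<Rightarrow> 'v set \<Rightarrow> bool" where
  "free_face_of K f p \<longleftrightarrow> principal K p \<and> f \<in> K \<and> f \<subset> p \<and>
     (\<forall>q\<in>K. f \<subset> q \<longrightarrow> q = p)"

definition elementary_C_collapse ::
  "'v set set \<Rightarrow> 'v set set \<Rightarrow> 'v set set \<Rightarrow> 'v set \<Rightarrow> 'v set \<Rightarrow> bool" where
  "elementary_C_collapse K C S p f \<longleftrightarrow>
     layered_complex K C S \<and> p \<in> C \<and> f \<in> C \<and> principal K p \<and> free_face_of K f p"

text \<open>Points of the realization are functions assigning barycentric coordinates to vertices.\<close>
definition simplex_pts :: "'v set \<Rightarrow> ('v \<Rightarrow> real) set" where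
  "simplex_pts s = {x. (\<forall>w. 0 \<le> x w) \<and> (\<forall>w. w \<notin> s \<longrightarrow> x w = 0) \<and> sum x s = 1}"

definition realization :: "'v set set \<Rightarrow> ('v \<Rightarrow> real) set" where
  "realization K = (\<Union>s\<in>K. simplex_pts s)"

text \<open>In barycentric coordinates, r(x) has
  coordinate x(f_i) - min_j x(f_j) at each vertex f_i of f, and the remaining mass
  1 - sum_i (x(f_i) - min) = x(v) + m * min at v.\<close>
definition free_retraction :: "'v set \<Rightarrow> 'v set \<Rightarrow> ('v \<Rightarrow> real) \<Rightarrow> ('v \<Rightarrow> real)" where
  "free_retraction p f x =
     (let v = (THE v. v \<in> p \<and> v \<notin> f); \<mu> = Min (x ` f) in
      (\<lambda>w. if w \<in> f then x w - \<mu>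
           else if w = v then 1 - (\<Sum>u\<in>f. x u - \<mu>)
           else 0))"

definition free_orth_homotopy ::
  "'v set \<Rightarrow> 'v set \<Rightarrow> real \<Rightarrow> ('v \<Rightarrow> real) \<Rightarrow> ('v \<Rightarrow> real)" where
  "free_orth_homotopy p f t x =
     (if x \<in> simplex_pts p
      then (\<lambda>w. (1 - t) * x w + t * free_retraction p f x w)
      else x)"

end

theory Submission
  imports Defs
begin

lemma sc_face:
  assumes "simplicial_complex K" "s \<in> K" "t \<subseteq> s" "t \<noteq> {}"
  shows "t \<in> K"
  using assms unfolding simplicial_complex_def by blast

lemma disj_pts:
  assumes lc: "layered_complex K C S" and pC: "p \<in> C" and sS: "s \<in> S"
    and xp: "x \<in> simplex_pts p" and xs: "x \<in> simplex_pts s"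
  shows False
proof -
  let ?A = "{w. x w \<noteq> 0}"
  have Ap: "?A \<subseteq> p" and As: "?A \<subseteq> s" using xp xs by (auto simp: simplex_pts_def)
  have ne: "?A \<noteq> {}"
  proof
    assume "?A = {}"
    then have "\<forall>w. x w = 0" by auto
    then have "sum x p = 0" by simp
    with xp show False by (simp add: simplex_pts_def)
  qed
  have scC: "simplicial_complex C" and scS: "simplicial_complex S" and "C \<inter> S = {}"
    using lc by (auto simp: layered_complex_def subcomplex_def)
  have "?A \<in> C" by (rule sc_face[OF scC pC Ap ne])
  moreover have "?A \<in> S" by (rule sc_face[OF scS sS As ne])
  ultimately show False using \<open>C \<inter> S = {}\<close> by blast
qed

lemma retr_pts:
  assumes pK: "p \<in> K" and sc: "simplicial_complex K" and ff: "free_face_of K f p"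
    and xp: "x \<in> simplex_pts p"
  shows "free_retraction p f x \<in> simplex_pts p"
proof -
  have fK: "f \<in> K" and fp: "f \<subset> p" and fr: "\<forall>q\<in>K. f \<subset> q \<longrightarrow> q = p"
    using ff by (auto simp: free_face_of_def)
  have finf: "finite f" "f \<noteq> {}" using fK sc by (auto simp: simplicial_complex_def)
  obtain v where v: "v \<in> p" "v \<notin> f" using fp by blast
  have "insert v f \<subseteq> p" using v fp by blast
  then have "insert v f \<in> K" using sc pK sc_face by blast
  moreover have "f \<subset> insert v f" using v by blast
  ultimately have pe0: "insert v f = p" using fr by blast
  then have pe: "p = insert v f" by simp
  have vthe: "(THE v. v \<in> p \<and> v \<notin> f) = v" using pe v by (intro the_equality) auto
  define \<mu> where "\<mu> = Min (x ` f)"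
  have mu_le: "\<And>u. u \<in> f \<Longrightarrow> \<mu> \<le> x u" unfolding \<mu>_def using finf by auto
  have mu_ge: "0 \<le> \<mu>" unfolding \<mu>_def using finf xp by (auto simp: simplex_pts_def)
  have r: "free_retraction p f x = (\<lambda>w. if w \<in> f then x w - \<mu>
           else if w = v then 1 - (\<Sum>u\<in>f. x u - \<mu>) else 0)"
    unfolding free_retraction_def vthe \<mu>_def Let_def by simp
  have sp: "sum x p = x v + sum x f" using pe v finf by simp
  have s1: "sum x p = 1" using xp by (simp add: simplex_pts_def)
  have sf: "(\<Sum>u\<in>f. x u - \<mu>) = sum x f - real (card f) * \<mu>"
    by (simp add: sum_subtractf)
  have xv: "0 \<le> x v" using xp by (simp add: simplex_pts_def)
  have nn: "0 \<le> 1 - (\<Sum>u\<in>f. x u - \<mu>)" 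
  proof -
    have "0 \<le> real (card f) * \<mu>" using mu_ge by simp
    then show ?thesis using sp s1 sf xv by linarith
  qed
  have sumr: "sum (free_retraction p f x) p = 1"
  proof -
    have "sum (free_retraction p f x) p = free_retraction p f x v + sum (free_retraction p f x) f"
      using pe v finf by simp
    also have "sum (free_retraction p f x) f = (\<Sum>u\<in>f. x u - \<mu>)"
      by (rule sum.cong) (auto simp: r)
    finally show ?thesis using v by (simp add: r)
  qed
  have a1: "\<forall>w. 0 \<le> free_retraction p f x w"
  proof
    fix w show "0 \<le> free_retraction p f x w"
      using nn mu_le[of w] unfolding r by simp
  qed
  have a2: "\<forall>w. w \<notin> p \<longrightarrow> free_retraction p f x w = 0"
    using pe unfolding r by simp
  show ?thesis unfolding simplex_pts_def using a1 a2 sumr by blast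
qed

theorem lemma5p4:
  fixes K C S :: "'v set set" and p f :: "'v set"
  assumes "elementary_C_collapse K C S p f"
  shows "\<forall>t\<in>{0..1::real}.
           free_orth_homotopy p f t ` (realization K - realization S)
              \<subseteq> realization K - realization S
         \<and> free_orth_homotopy p f t ` realization S = realization S"
proof
  fix t :: real assume t: "t \<in> {0..1}"
  have lc: "layered_complex K C S" and pC: "p \<in> C" and ff: "free_face_of K f p"
    using assms by (auto simp: elementary_C_collapse_def)
  have sc: "simplicial_complex K" using lc by (simp add: layered_complex_def)
  have pK: "p \<in> K" using ff by (simp add: free_face_of_def principal_def)
  have notp: "x \<notin> simplex_pts p" if xS: "x \<in> realization S" for x
    
  proof
    assume "x \<in> simplex_pts p"
    moreover obtain s where "s \<in> S" "x \<in> simplex_pts s" using xS unfolding realization_def by blast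
    ultimately show False using disj_pts[OF lc pC] by metis
  qed
  have idS: "free_orth_homotopy p f t x = x" if "x \<in> realization S" for x
    using notp[OF that] by (simp add: free_orth_homotopy_def)
  have Hp: "free_orth_homotopy p f t x \<in> simplex_pts p" if xp: "x \<in> simplex_pts p" for x
  proof -
    have r: "free_retraction p f x \<in> simplex_pts p" by (rule retr_pts[OF pK sc ff xp])
    let ?y = "\<lambda>w. (1 - t) * x w + t * free_retraction p f x w"
    have "sum ?y p = (1 - t) * sum x p + t * sum (free_retraction p f x) p"
      by (simp add: sum.distrib sum_distrib_left)
    also have "\<dots> = 1" using xp r by (simp add: simplex_pts_def)
    finally have "sum ?y p = 1" .
    moreover have "0 \<le> ?y w" for w
    proof -
      have "0 \<le> x w" "0 \<le> free_retraction p f x w" using xp r by (simp_all add: simplex_pts_def)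
      then show ?thesis using t by (intro add_nonneg_nonneg mult_nonneg_nonneg) auto
    qed
    moreover have "?y w = 0" if "w \<notin> p" for w using xp r that by (simp add: simplex_pts_def)
    ultimately show ?thesis using xp by (simp add: free_orth_homotopy_def simplex_pts_def)
  qed
  show "free_orth_homotopy p f t ` (realization K - realization S)
              \<subseteq> realization K - realization S
         \<and> free_orth_homotopy p f t ` realization S = realization S"
  proof
    show "free_orth_homotopy p f t ` (realization K - realization S)
              \<subseteq> realization K - realization S"
    proof
      fix y assume "y \<in> free_orth_homotopy p f t ` (realization K - realization S)"
      then obtain x where x: "x \<in> realization K" "x \<notin> realization S"
        and y: "y = free_orth_homotopy p f t x" by blast
      show "y \<in> realization K - realization S"
      proof (cases "x \<in> simplex_pts p")
        case True
        then have "y \<in> simplex_pts p" using Hp y by simp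
        moreover have "y \<in> realization K" unfolding realization_def using pK \<open>y \<in> simplex_pts p\<close> by blast
        ultimately show ?thesis using notp by blast
      next
        case False
        then show ?thesis using x y by (simp add: free_orth_homotopy_def)
      qed
    qed
    show "free_orth_homotopy p f t ` realization S = realization S"
      using idS by simp
  qed
qed

end
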